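(* Let $P$, $\mathcal{R}$ and the algorithm be as below, with output graph $G$. Let $q,q'\in P$ with $x(q)<x(q')$ such that the edge $qq'$ is Delaunay. If $qq'\notin E(G)$, then either (i) $h(qq')$ discretely pierces a rectangle of $\mathcal{R}$ or crosses an edge existing when $q'$ is processed, or (ii) $v(qq')$ discretely pierces a rectangle of $\mathcal{R}$. In particular, $v(qq')$ does not cross an existing edge.
   Context: $P$ is a finite point set and $\mathcal{R}$ a finite family of non-piercing axis-parallel rectangles (for any $R_1,R_2$, $R_1\setminus R_2$ connected), in general position. For $x(q)<x(q')$ the edge $qq'$ is the L-shaped curve consisting of the vertical segment $v(qq')$ from $q'$ to $(x(q'),y(q))$ and the horizontal segment $h(qq')$ from $(x(q'),y(q))$ to $q$. It is Delaunay if the interior of the rectangle with diagonal corners $q,q'$ contains no point of $P$. A set $S$ discretely pierces a rectangle $R$ if $R\setminus S$ has two components, each containing a point of $P$. An edge is valid if it discretely pierces no rectangle of $\mathcal{R}$ and crosses no edge already present. The algorithm sorts $P$ by $x$-coordinate as $p_1,\dots,p_n$ and for $i=2,\dots,n$ (processing $p_i$) adds all valid Delaunay edges $p_ip_j$ with $j<i$. *)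

theory Defs
  imports "HOL-Analysis.Analysis"
begin

type_synonym pt = "real \<times> real"

text \<open>Corner of the L-shaped edge qq' (for x(q) < x(q')): the point (x(q'), y(q)).\<close>
definition corner :: "pt \<Rightarrow> pt \<Rightarrow> pt" where
  "corner q q' = (fst q', snd q)"

definition vpart :: "pt \<Rightarrow> pt \<Rightarrow> pt set" where
  "vpart q q' = closed_segment q' (corner q q')"

definition hpart :: "pt \<Rightarrow> pt \<Rightarrow> pt set" where
  "hpart q q' = closed_segment (corner q q') q"

definition edge_curve :: "pt \<Rightarrow> pt \<Rightarrow> pt set" where
  "edge_curve q q' = vpart q q' \<union> hpart q q'"

definition delaunay :: "pt set \<Rightarrow> pt \<Rightarrow> pt \<Rightarrow> bool" where
  "delaunay P q q' \<longleftrightarrow>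
     (\<forall>z\<in>P. \<not> (min (fst q) (fst q') < fst z \<and> fst z < max (fst q) (fst q') \<and>
                 min (snd q) (snd q') < snd z \<and> snd z < max (snd q) (snd q')))"

definition dpierces :: "pt set \<Rightarrow> pt set \<Rightarrow> pt set \<Rightarrow> bool" where
  "dpierces P S R \<longleftrightarrow> card (components (R - S)) = 2 \<and> (\<forall>C\<in>components (R - S). C \<inter> P \<noteq> {})"

definition h_crosses :: "pt \<times> pt \<Rightarrow> pt \<times> pt \<Rightarrow> bool" where
  "h_crosses e f \<longleftrightarrow>
     open_segment (corner (fst e) (snd e)) (fst e) \<inter> open_segment (snd f) (corner (fst f) (snd f)) \<noteq> {}"

definition v_crosses :: "pt \<times> pt \<Rightarrow> pt \<times> pt \<Rightarrow> bool" where
  "v_crosses e f \<longleftrightarrow>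
     open_segment (snd e) (corner (fst e) (snd e)) \<inter> open_segment (corner (fst f) (snd f)) (fst f) \<noteq> {}"

definition crosses :: "pt \<times> pt \<Rightarrow> pt \<times> pt \<Rightarrow> bool" where
  "crosses e f \<longleftrightarrow> h_crosses e f \<or> v_crosses e f"

definition valid :: "pt set \<Rightarrow> pt set set \<Rightarrow> (pt \<times> pt) set \<Rightarrow> pt \<Rightarrow> pt \<Rightarrow> bool" where
  "valid P Rs E q q' \<longleftrightarrow>
     (\<forall>R\<in>Rs. \<not> dpierces P (edge_curve q q') R) \<and> (\<forall>f\<in>E. \<not> crosses (q, q') f)"

text \<open>Edge set after processing p_1, ..., p_i (points indexed 1..n in increasing x-order).
  Edges are stored as pairs (left endpoint, right endpoint).\<close>
fun alg_edges :: "pt set \<Rightarrow> pt set set \<Rightarrow> (nat \<Rightarrow> pt) \<Rightarrow> nat \<Rightarrow> (pt \<times> pt) set" where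
  "alg_edges P Rs p 0 = {}"
| "alg_edges P Rs p (Suc i) = alg_edges P Rs p i \<union>
     {(p j, p (Suc i)) | j. 1 \<le> j \<and> j < Suc i \<and> delaunay P (p j) (p (Suc i)) \<and>
                            valid P Rs (alg_edges P Rs p i) (p j) (p (Suc i))}"

definition is_rect :: "pt set \<Rightarrow> bool" where
  "is_rect R \<longleftrightarrow> (\<exists>a b. R = cbox a b \<and> fst a < fst b \<and> snd a < snd b)"

definition non_piercing :: "pt set set \<Rightarrow> bool" where
  "non_piercing Rs \<longleftrightarrow> (\<forall>R1\<in>Rs. \<forall>R2\<in>Rs. connected (R1 - R2))"

definition gen_pos :: "pt set \<Rightarrow> pt set set \<Rightarrow> bool" where
  "gen_pos P Rs \<longleftrightarrow> inj_on fst P \<and> inj_on snd P \<and>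
     (\<forall>R\<in>Rs. \<forall>a b. R = cbox a b \<longrightarrow>
        {fst a, fst b} \<inter> fst ` P = {} \<and> {snd a, snd b} \<inter> snd ` P = {} \<and>
        (\<forall>R'\<in>Rs. \<forall>a' b'. R' \<noteq> R \<and> R' = cbox a' b' \<longrightarrow>
           {fst a, fst b} \<inter> {fst a', fst b'} = {} \<and> {snd a, snd b} \<inter> {snd a', snd b'} = {}))"

end

theory Submission
  imports Defs
begin


lemma mem_cbox_pt: "(z::pt) \<in> cbox a b \<longleftrightarrow> fst a \<le> fst z \<and> fst z \<le> fst b \<and> snd a \<le> snd z \<and> snd z \<le> snd b"
  by (cases z; cases a; cases b) (auto simp: cbox_Pair_eq)

lemma seg_param: assumes "(z::pt) \<in> closed_segment u w"
  shows "\<exists>t. 0 \<le> t \<and> t \<le> 1 \<and> fst z = (1-t)* fst u + t* fst w \<and> snd z = (1-t)* snd u + t* snd w"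
  using assms by (auto simp: in_segment)

lemma conv_le_max: assumes "0 \<le> t" "t \<le> (1::real)" shows "(1-t)*a + t*b \<le> max a b"
proof -
  have "(1-t)*a \<le> (1-t)*max a b" using assms by (intro mult_left_mono) auto
  moreover have "t*b \<le> t*max a b" using assms by (intro mult_left_mono) auto
  ultimately show ?thesis by (simp add: algebra_simps)
qed

lemma seg_fst_le: "(z::pt) \<in> closed_segment u w \<Longrightarrow> fst z \<le> max (fst u) (fst w)"
  using seg_param conv_le_max by metis

lemma seg_fst_eq: "(z::pt) \<in> closed_segment u w \<Longrightarrow> fst u = fst w \<Longrightarrow> fst z = fst u"
  using seg_param by (metis add_diff_cancel_left' diff_add_cancel distrib_right mult_1 mult_1_left)

lemma seg_snd_eq: "(z::pt) \<in> closed_segment u w \<Longrightarrow> snd u = snd w \<Longrightarrow> snd z = snd u"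
  using seg_param by (metis add_diff_cancel_left' diff_add_cancel distrib_right mult_1 mult_1_left)

lemma no_dpierce:
  assumes "connected S" "S \<subseteq> R - Y" "P \<inter> (R - Y) \<subseteq> S"
  shows "\<not> dpierces P Y R"
proof
  assume d: "dpierces P Y R"
  then obtain C1 C2 where c: "components (R - Y) = {C1, C2}" "C1 \<noteq> C2"
    unfolding dpierces_def card_2_iff by blast
  have i1: "C1 \<in> components (R - Y)" and i2: "C2 \<in> components (R - Y)" using c by auto
  obtain z where z: "z \<in> C1" "z \<in> P" using d i1 unfolding dpierces_def by blast
  obtain z2 where z2: "z2 \<in> C2" "z2 \<in> P" using d i2 unfolding dpierces_def by blast
  have "z \<in> S" using z in_components_subset[OF i1] assms(3) by blast
  have "z2 \<in> S" using z2 in_components_subset[OF i2] assms(3) by blast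
  have "S \<subseteq> C1" using components_maximal[OF i1 assms(1,2)] \<open>z \<in> S\<close> z by blast
  moreover have "S \<subseteq> C2" using components_maximal[OF i2 assms(1,2)] \<open>z2 \<in> S\<close> z2 by blast
  ultimately have "C1 \<inter> C2 \<noteq> {}" using \<open>z \<in> S\<close> by blast
  then show False using components_nonoverlap[OF i1 i2] c(2) by blast
qed

lemma conn_rect_minus_box:
  fixes a1 a2 b1 b2 l1 l2 h1 h2 :: real
  assumes "a1 < h1" "h1 < b1" "(a2 < l2 \<and> l2 < b2) \<or> (a2 < h2 \<and> h2 < b2)" "a2 < b2"
  shows "connected (cbox (a1,a2) (b1,b2) - cbox (l1,l2) (h1,h2))"
proof -
  define Le where "Le = ({a1..b1} \<inter> {..<l1}) \<times> {a2..b2}"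
  define Ri where "Ri = ({a1..b1} \<inter> {h1<..}) \<times> {a2..b2}"
  define Bo where "Bo = {a1..b1} \<times> ({a2..b2} \<inter> {..<l2})"
  define To where "To = {a1..b1} \<times> ({a2..b2} \<inter> {h2<..})"
  have eq: "cbox (a1,a2) (b1,b2) - cbox (l1,l2) (h1,h2) = ((Ri \<union> Bo) \<union> To) \<union> Le"
    unfolding Le_def Ri_def Bo_def To_def by (auto simp: mem_cbox_pt)
  have cv: "convex Le" "convex Ri" "convex Bo" "convex To"
    unfolding Le_def Ri_def Bo_def To_def
    by (intro convex_Times convex_Int convex_real_interval; simp)+
  have c1: "connected (Ri \<union> Bo)"
  proof (cases "Bo = {}")
    case True then show ?thesis using cv convex_connected by auto
  next
    case False
    then have "a2 < l2" unfolding Bo_def by auto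
    then have "(b1,a2) \<in> Ri \<inter> Bo" using assms unfolding Ri_def Bo_def by auto
    then show ?thesis using cv convex_connected connected_Un by blast
  qed
  have c2: "connected ((Ri \<union> Bo) \<union> To)"
  proof (cases "To = {}")
    case True then show ?thesis using c1 by auto
  next
    case False
    then have "h2 < b2" unfolding To_def by auto
    then have "(b1,b2) \<in> (Ri \<union> Bo) \<inter> To" using assms unfolding Ri_def To_def by auto
    then show ?thesis using c1 cv convex_connected connected_Un by blast
  qed
  have c3: "connected (((Ri \<union> Bo) \<union> To) \<union> Le)"
  proof (cases "Le = {}")
    case True then show ?thesis using c2 by auto
  next
    case False
    then have "a1 < l1" unfolding Le_def by auto
    have "(a1,a2) \<in> ((Ri \<union> Bo) \<union> To) \<inter> Le \<or> (a1,b2) \<in> ((Ri \<union> Bo) \<union> To) \<inter> Le"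
      using assms \<open>a1 < l1\<close> unfolding Le_def Bo_def To_def by auto
    then show ?thesis using c2 cv convex_connected connected_Un by blast
  qed
  show ?thesis using eq c3 by simp
qed



lemma key:
  assumes "is_rect R" "gen_pos P Rs" "R \<in> Rs" "q \<in> P" "q' \<in> P" "fst q < fst q'"
    "delaunay P q q'" "dpierces P (edge_curve q q') R"
  shows "dpierces P (hpart q q') R \<or> dpierces P (vpart q q') R"
proof -
  obtain a b where R: "R = cbox a b" "fst a < fst b" "snd a < snd b"
    using assms(1) unfolding is_rect_def by blast
  note H = conjunct2[OF conjunct2[OF assms(2)[unfolded gen_pos_def]]]
  note H2 = H[rule_format, OF assms(3) R(1)]
  have g: "{fst a, fst b} \<inter> fst ` P = {} \<and> {snd a, snd b} \<inter> snd ` P = {}"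
    using conjunct1[OF H2] conjunct1[OF conjunct2[OF H2]] by (rule conjI)
  have "fst q' \<in> fst ` P" "snd q \<in> snd ` P" using assms(4,5) by auto
  then have gp: "fst q' \<noteq> fst a" "fst q' \<noteq> fst b" "snd q \<noteq> snd a" "snd q \<noteq> snd b"
    using g by blast+
  have vfst: "\<And>z. z \<in> vpart q q' \<Longrightarrow> fst z = fst q'"
    unfolding vpart_def corner_def using seg_fst_eq by fastforce
  have hsnd: "\<And>z. z \<in> hpart q q' \<Longrightarrow> snd z = snd q"
    unfolding hpart_def corner_def using seg_snd_eq by fastforce
  consider "fst q' < fst a \<or> fst b < fst q'" | "snd q < snd a \<or> snd b < snd q"
    | "fst a < fst q'" "fst q' < fst b" "snd a < snd q" "snd q < snd b"
    using gp by linarith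
  then show ?thesis
  proof cases
    case 1
    then have "vpart q q' \<inter> R = {}" using vfst R(1) by (auto simp: mem_cbox_pt)
    then have "R - edge_curve q q' = R - hpart q q'" unfolding edge_curve_def by blast
    then show ?thesis using assms(8) unfolding dpierces_def by simp
  next
    case 2
    then have "hpart q q' \<inter> R = {}" using hsnd R(1) by (auto simp: mem_cbox_pt)
    then have "R - edge_curve q q' = R - vpart q q'" unfolding edge_curve_def by blast
    then show ?thesis using assms(8) unfolding dpierces_def by simp
  next
    case 3
    define K where "K = cbox (fst q, min (snd q) (snd q')) (fst q', max (snd q) (snd q'))"
    have cK: "convex K" unfolding K_def by (rule convex_box)
    have qK: "q \<in> K" "q' \<in> K" "corner q q' \<in> K"
      unfolding K_def corner_def using assms(6) by (auto simp: mem_cbox_pt)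
    have LK: "edge_curve q q' \<subseteq> K"
      unfolding edge_curve_def vpart_def hpart_def
      using closed_segment_subset[OF _ _ cK] qK by blast
    have Req: "R = cbox (fst a, snd a) (fst b, snd b)" using R(1) by simp
    have conn: "connected (R - K)"
      unfolding Req K_def
      apply (rule conn_rect_minus_box)
      using 3 R by (auto simp: min_def max_def)
    have qL: "q \<in> edge_curve q q'" "q' \<in> edge_curve q q'"
      unfolding edge_curve_def hpart_def vpart_def by auto
    have injf: "inj_on fst P" and injs: "inj_on snd P" using assms(2) unfolding gen_pos_def by auto
    have PS: "P \<inter> (R - edge_curve q q') \<subseteq> R - K"
    proof
      fix z assume z: "z \<in> P \<inter> (R - edge_curve q q')"
      then have zq: "z \<noteq> q" "z \<noteq> q'" using qL by auto
      have zP: "z \<in> P" using z by blast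
      have f1: "fst z \<noteq> fst q" using inj_onD[OF injf _ zP assms(4)] zq(1) by blast
      have f2: "fst z \<noteq> fst q'" using inj_onD[OF injf _ zP assms(5)] zq(2) by blast
      have s1: "snd z \<noteq> snd q" using inj_onD[OF injs _ zP assms(4)] zq(1) by blast
      have s2: "snd z \<noteq> snd q'" using inj_onD[OF injs _ zP assms(5)] zq(2) by blast
      have "z \<notin> K"
      proof
        assume "z \<in> K"
        then have zz: "fst q \<le> fst z" "fst z \<le> fst q'" "min (snd q) (snd q') \<le> snd z" "snd z \<le> max (snd q) (snd q')"
          unfolding K_def mem_cbox_pt by simp_all
        have "min (fst q) (fst q') < fst z \<and> fst z < max (fst q) (fst q') \<and>
                 min (snd q) (snd q') < snd z \<and> snd z < max (snd q) (snd q')"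
          using zz f1 f2 s1 s2 assms(6) by (cases "snd q \<le> snd q'"; simp add: min_def max_def; linarith)
        then show False using assms(7) z unfolding delaunay_def by blast
      qed
      then show "z \<in> R - K" using z by blast
    qed
    have "\<not> dpierces P (edge_curve q q') R"
      by (rule no_dpierce[OF conn]) (use LK PS in auto)
    then show ?thesis using assms(8) by blast
  qed
qed

lemma alg_mono: "i \<le> m \<Longrightarrow> alg_edges P Rs p i \<subseteq> alg_edges P Rs p m"
  by (induction m) (auto simp: le_Suc_eq)

lemma alg_form: "f \<in> alg_edges P Rs p i \<Longrightarrow> \<exists>j m. f = (p j, p m) \<and> 1 \<le> j \<and> j < m \<and> m \<le> i"
proof (induction i)
  case 0 then show ?case by simp
next
  case (Suc i)
  then show ?case by (auto intro: le_SucI)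
qed



theorem proposition6:
  fixes P :: "pt set" and Rs :: "pt set set" and p :: "nat \<Rightarrow> pt" and n k :: nat
    and q q' :: pt
  assumes "finite P" and "finite Rs"
    and "\<forall>R\<in>Rs. is_rect R" and "non_piercing Rs" and "gen_pos P Rs"
    and "n = card P" and "p ` {1..n} = P"
    and "\<forall>i\<in>{1..n}. \<forall>j\<in>{1..n}. i < j \<longrightarrow> fst (p i) < fst (p j)"
    and "q \<in> P" and "q' \<in> P" and "fst q < fst q'"
    and "delaunay P q q'"
    and "k \<in> {1..n}" and "p k = q'"
    and "(q, q') \<notin> alg_edges P Rs p n"
  shows "(((\<exists>R\<in>Rs. dpierces P (hpart q q') R) \<or> (\<exists>f\<in>alg_edges P Rs p (k - 1). h_crosses (q, q') f))
           \<or> (\<exists>R\<in>Rs. dpierces P (vpart q q') R))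
         \<and> (\<forall>f\<in>alg_edges P Rs p (k - 1). \<not> v_crosses (q, q') f)"
proof -
  define E where "E = alg_edges P Rs p (k - 1)"
  obtain j where j: "j \<in> {1..n}" "p j = q" using assms(7,9) by blast
  have jk: "j < k"
  proof (rule ccontr)
    assume "\<not> j < k"
    then have "j = k \<or> k < j" by auto
    then show False
    proof
      assume "j = k" then show False using j assms(14,11) by simp
    next
      assume "k < j" then have "fst (p k) < fst (p j)" using assms(8,13) j(1) by blast
      then show False using j assms(14,11) by simp
    qed
  qed
  have kS: "Suc (k - 1) = k" using assms(13) by simp
  have sub: "alg_edges P Rs p k \<subseteq> alg_edges P Rs p n" using alg_mono assms(13) by simp
  have nv: "\<not> valid P Rs E q q'"
  proof
    assume v: "valid P Rs E q q'"
    let ?i = "k - 1"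
    have m: "(p j, p (Suc ?i)) \<in> {(p j', p (Suc ?i)) | j'. 1 \<le> j' \<and> j' < Suc ?i \<and> delaunay P (p j') (p (Suc ?i)) \<and>
                            valid P Rs (alg_edges P Rs p ?i) (p j') (p (Suc ?i))}"
      using v j jk assms(12,14) kS unfolding E_def by (intro CollectI exI[of _ j]) auto
    have "(p j, p (Suc (k-1))) \<in> alg_edges P Rs p (Suc (k - 1))"
      unfolding alg_edges.simps(2) using m by (rule UnI2)
    then have "(q, q') \<in> alg_edges P Rs p k" using j assms(14) kS by simp
    then show False using sub assms(15) by blast
  qed
  have noV: "\<forall>f\<in>E. \<not> v_crosses (q, q') f"
  proof (intro ballI notI)
    fix f assume fE: "f \<in> E" and vc: "v_crosses (q, q') f"
    obtain i m where f: "f = (p i, p m)" "1 \<le> i" "i < m" "m \<le> k - 1"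
      using alg_form fE unfolding E_def by blast
    have mi: "m \<in> {1..n}" "i \<in> {1..n}" "m < k" using f assms(13) by auto
    have lt1: "fst (p i) < fst (p m)" using assms(8) mi(1,2) f(3) by blast
    have lt2: "fst (p m) < fst q'" using assms(8) mi(1,3) assms(13,14) by blast
    obtain z where z: "z \<in> open_segment q' (corner q q')"
      "z \<in> open_segment (corner (p i) (p m)) (p i)"
      using vc f unfolding v_crosses_def by auto
    have "fst z = fst q'" using z(1) seg_fst_eq[of z q' "corner q q'"]
      unfolding corner_def open_segment_def by auto
    moreover have "fst z \<le> max (fst (corner (p i) (p m))) (fst (p i))"
      using z(2) seg_fst_le unfolding open_segment_def by blast
    ultimately show False using lt1 lt2 unfolding corner_def by auto
  qed
  have A: "((\<exists>R\<in>Rs. dpierces P (hpart q q') R) \<or> (\<exists>f\<in>E. h_crosses (q, q') f))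
           \<or> (\<exists>R\<in>Rs. dpierces P (vpart q q') R)"
  proof -
    from nv have "(\<exists>R\<in>Rs. dpierces P (edge_curve q q') R) \<or> (\<exists>f\<in>E. crosses (q, q') f)"
      unfolding valid_def by blast
    then show ?thesis
    proof
      assume "\<exists>R\<in>Rs. dpierces P (edge_curve q q') R"
      then obtain R where R: "R \<in> Rs" "dpierces P (edge_curve q q') R" by blast
      then show ?thesis using key[OF _ assms(5) R(1) assms(9,10,11,12) R(2)] assms(3) by blast
    next
      assume "\<exists>f\<in>E. crosses (q, q') f"
      then show ?thesis using noV unfolding crosses_def by blast
    qed
  qed
  show ?thesis using A noV unfolding E_def by blast
qed


end
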